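(* Let $F$ be a field containing a primitive cube root of unity $q$. Let $L=F[x]/(x^3)$, graded by $\mathbb Z_3$ with $\deg x^k=k\bmod 3$, in the category of $\mathbb Z_3$-graded vector spaces with braiding $C(a\otimes b)=r(|b|,|a|)\,b\otimes a$, where $r(k,m)=q^{km}$, and with bracket $[a,b]=ab-r(|b|,|a|)\,ba$ for homogeneous $a,b$. Then $(L,[\ \,])$ is a braided m-Lie algebra and a (left) Jacobi braided Lie algebra, but it is not a strict Jacobi braided Lie algebra (the braided anti-symmetry $[\ \,]=-[\ \,]C_{L,L}$ fails), and there is no coalgebra structure $(\Delta,\varepsilon)$ on $L$ in this category making $(L,\Delta,\varepsilon,[\ \,])$ a (left) braided Lie algebra in the sense of Majid.
   Context: Braided m-Lie algebra: an object $L$ with morphism $[\ \,]:L\otimes L\to L$ such that there are an algebra $(A,m)$ in the category and a monomorphism $\phi:L\to A$ with $\phi[\ \,]=m(\phi\otimes\phi)-m(\phi\otimes\phi)C_{L,L}$. (BJI): with $C=C_{L,L}$, $[\ \,](L\otimes[\ \,]) + [\ \,](L\otimes[\ \,])(L\otimes C^{-1})(C\otimes L) + [\ \,](L\otimes[\ \,])(C^{-1}\otimes L)(L\otimes C) = 0$. A (left) Jacobi braided Lie algebra satisfies (BJI); a (left) strict Jacobi braided Lie algebra satisfies both (BJI) and (BAS): $[\ \,]=-[\ \,]C_{L,L}$. Majid's (left) braided Lie algebra: a coalgebra $(L,\Delta,\varepsilon)$ in the category (degree-preserving, coassociative, counital, with $F$ in degree $0$) with a morphism $[\ \,]$ such that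 (L1) $[\ \,](L\otimes[\ \,]) = [\ \,]([\ \,]\otimes[\ \,])(L\otimes C\otimes L)(\Delta\otimes L\otimes L)$; (L2) $C([\ \,]\otimes L)(L\otimes C)(\Delta\otimes L) = (L\otimes[\ \,])(\Delta\otimes L)$; (L3) $\Delta[\ \,] = ([\ \,]\otimes[\ \,])(L\otimes C\otimes L)(\Delta\otimes\Delta)$ and $\varepsilon[\ \,]=\varepsilon\otimes\varepsilon$. *)

theory Defs
  imports Main "HOL.Vector_Spaces" "HOL-Library.Function_Algebras"
begin

text \<open>Concrete encoding of the category of Z3-graded F-vector spaces, restricted to
 the tensor powers L^{\<otimes>n} of L = F[x]/(x^3) (basis e_0=1, e_1=x, e_2=x^2, deg e_k = k).
 A basis tensor e_{i1}\<otimes>...\<otimes>e_{in} of L^{\<otimes>n} is indexed by the list [i1,...,in];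
 L^{\<otimes>0} = F (index []).  A linear map L^{\<otimes>n} \<rightarrow> L^{\<otimes>m} is given by its matrix
 M out inp (coefficient of basis tensor out in the image of basis tensor inp).\<close>

type_synonym 'f mor = "nat list \<Rightarrow> nat list \<Rightarrow> 'f"

definition idx :: "nat \<Rightarrow> nat list set" where
  "idx n = {xs. length xs = n \<and> set xs \<subseteq> {0,1,2}}"

definition deg :: "nat list \<Rightarrow> nat" where
  "deg xs = sum_list xs mod 3"

definition r :: "'f::field \<Rightarrow> nat \<Rightarrow> nat \<Rightarrow> 'f" where
  "r q k m = q ^ (k * m)"

definition is_mor :: "nat \<Rightarrow> nat \<Rightarrow> 'f::field mor \<Rightarrow> bool" where
  "is_mor n m M \<longleftrightarrow> (\<forall>out inp. M out inp \<noteq> 0 \<longrightarrow>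
      out \<in> idx m \<and> inp \<in> idx n \<and> deg out = deg inp)"

definition comp :: "nat \<Rightarrow> 'f::field mor \<Rightarrow> 'f mor \<Rightarrow> 'f mor" where
  "comp k M N = (\<lambda>out inp. \<Sum>mid\<in>idx k. M out mid * N mid inp)"

definition tens :: "nat \<Rightarrow> nat \<Rightarrow> 'f::field mor \<Rightarrow> 'f mor \<Rightarrow> 'f mor" where
  "tens m1 n1 M N = (\<lambda>out inp. M (take m1 out) (take n1 inp) * N (drop m1 out) (drop n1 inp))"

definition idm :: "nat \<Rightarrow> 'f::field mor" where
  "idm n = (\<lambda>out inp. if out = inp \<and> inp \<in> idx n then 1 else 0)"

definition madd :: "'f::field mor \<Rightarrow> 'f mor \<Rightarrow> 'f mor" where
  "madd M N = (\<lambda>out inp. M out inp + N out inp)"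

definition mneg :: "'f::field mor \<Rightarrow> 'f mor" where
  "mneg M = (\<lambda>out inp. - M out inp)"

definition mdiff :: "'f::field mor \<Rightarrow> 'f mor \<Rightarrow> 'f mor" where
  "mdiff M N = (\<lambda>out inp. M out inp - N out inp)"

text \<open>braiding C_{L,L}(a \<otimes> b) = r(|b|,|a|) b \<otimes> a, so C(e_i \<otimes> e_j) = r(j,i) e_j \<otimes> e_i\<close>
definition Cbr :: "'f::field \<Rightarrow> 'f mor" where
  "Cbr q = (\<lambda>out inp. if inp \<in> idx 2 \<and> out = rev inp
                        then r q (inp ! 1) (inp ! 0) else 0)"

definition Cinv :: "'f::field \<Rightarrow> 'f mor" where
  "Cinv q = (\<lambda>out inp. if inp \<in> idx 2 \<and> out = rev inp
                        then inverse (r q (inp ! 0) (inp ! 1)) else 0)"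

definition Lmult :: "'f::field mor" where
  "Lmult = (\<lambda>out inp. if inp \<in> idx 2 \<and> out = [inp ! 0 + inp ! 1] \<and> inp ! 0 + inp ! 1 \<le> 2
                        then 1 else 0)"

definition Lbr :: "'f::field \<Rightarrow> 'f mor" where
  "Lbr q = mdiff Lmult (comp 2 Lmult (Cbr q))"

definition BJI :: "'f::field \<Rightarrow> 'f mor \<Rightarrow> bool" where
  "BJI q B \<longleftrightarrow>
    (let J = comp 2 B (tens 1 1 (idm 1) B) in
     madd J (madd (comp 3 (comp 3 J (tens 1 1 (idm 1) (Cinv q))) (tens 2 2 (Cbr q) (idm 1)))
                  (comp 3 (comp 3 J (tens 2 2 (Cinv q) (idm 1))) (tens 1 1 (idm 1) (Cbr q))))
     = (\<lambda>_ _. 0))"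

definition BAS :: "'f::field \<Rightarrow> 'f mor \<Rightarrow> bool" where
  "BAS q B \<longleftrightarrow> B = mneg (comp 2 B (Cbr q))"

definition jacobi_braided_Lie :: "'f::field \<Rightarrow> 'f mor \<Rightarrow> bool" where
  "jacobi_braided_Lie q B \<longleftrightarrow> BJI q B"

definition strict_jacobi_braided_Lie :: "'f::field \<Rightarrow> 'f mor \<Rightarrow> bool" where
  "strict_jacobi_braided_Lie q B \<longleftrightarrow> BJI q B \<and> BAS q B"

definition coalgebra :: "'f::field mor \<Rightarrow> 'f mor \<Rightarrow> bool" where
  "coalgebra D e \<longleftrightarrow> is_mor 1 2 D \<and> is_mor 1 0 e \<and>
     comp 2 (tens 2 1 D (idm 1)) D = comp 2 (tens 1 1 (idm 1) D) D \<and>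
     comp 2 (tens 0 1 e (idm 1)) D = idm 1 \<and>
     comp 2 (tens 1 1 (idm 1) e) D = idm 1"

definition majid_braided_Lie :: "'f::field \<Rightarrow> 'f mor \<Rightarrow> 'f mor \<Rightarrow> 'f mor \<Rightarrow> bool" where
  "majid_braided_Lie q D e B \<longleftrightarrow> coalgebra D e \<and>
     \<comment> \<open>(L1)\<close>
     comp 2 B (tens 1 1 (idm 1) B) =
       comp 2 B (comp 4 (tens 1 2 B B)
         (comp 4 (tens 1 1 (idm 1) (tens 2 2 (Cbr q) (idm 1))) (tens 2 1 D (idm 2)))) \<and>
     \<comment> \<open>(L2)\<close>
     comp 2 (Cbr q) (comp 3 (tens 1 2 B (idm 1)) (comp 3 (tens 1 1 (idm 1) (Cbr q)) (tens 2 1 D (idm 1))))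
       = comp 3 (tens 1 1 (idm 1) B) (tens 2 1 D (idm 1)) \<and>
     \<comment> \<open>(L3)\<close>
     comp 1 D B =
       comp 4 (tens 1 2 B B) (comp 4 (tens 1 1 (idm 1) (tens 2 2 (Cbr q) (idm 1))) (tens 2 1 D D)) \<and>
     comp 1 e B = tens 0 1 e e"

text \<open>Braided m-Lie algebra: there are a Z3-graded associative algebra (A, m) in the category
 (underlying additive group the type 'a, scalar action sc, grading G 0, G 1, G 2) and a
 monomorphism \<phi> : L \<rightarrow> A (given by the images v k of the basis vectors e_k) with
 \<phi>[ ] = m(\<phi>\<otimes>\<phi>) - m(\<phi>\<otimes>\<phi>)C_{L,L}.\<close>
definition braided_mLie :: "'a::ab_group_add itself \<Rightarrow> 'f::field \<Rightarrow> 'f mor \<Rightarrow> bool" where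
  "braided_mLie _ q B \<longleftrightarrow>
    (\<exists>(sc :: 'f \<Rightarrow> 'a \<Rightarrow> 'a) (m :: 'a \<Rightarrow> 'a \<Rightarrow> 'a) (G :: nat \<Rightarrow> 'a set) (v :: nat \<Rightarrow> 'a).
       vector_space sc \<and>
       (\<forall>k<3. module.subspace sc (G k)) \<and>
       (\<forall>a. \<exists>!(a0, a1, a2). a0 \<in> G 0 \<and> a1 \<in> G 1 \<and> a2 \<in> G 2 \<and> a = a0 + a1 + a2) \<and>
       (\<forall>a b c. m (a + b) c = m a c + m b c) \<and>
       (\<forall>a b c. m a (b + c) = m a b + m a c) \<and>
       (\<forall>k a b. m (sc k a) b = sc k (m a b)) \<and>
       (\<forall>k a b. m a (sc k b) = sc k (m a b)) \<and>
       (\<forall>a b c. m (m a b) c = m a (m b c)) \<and>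
       (\<forall>i<3. \<forall>j<3. \<forall>a\<in>G i. \<forall>b\<in>G j. m a b \<in> G ((i + j) mod 3)) \<and>
       (\<forall>k<3. v k \<in> G k) \<and>
       (\<forall>c0 c1 c2. sc c0 (v 0) + sc c1 (v 1) + sc c2 (v 2) = 0 \<longrightarrow> c0 = 0 \<and> c1 = 0 \<and> c2 = 0) \<and>
       (\<forall>i<3. \<forall>j<3. (\<Sum>k<3. sc (B [k] [i, j]) (v k))
            = m (v i) (v j) - sc (r q j i) (m (v j) (v i))))"

end

theory Submission
  imports Defs
begin

lemma finite_idx: "finite (idx n)"
proof -
  have "idx n = {xs. set xs \<subseteq> {0,1,2::nat} \<and> length xs = n}" by (auto simp: idx_def)
  then show ?thesis using finite_lists_length_eq[of "{0,1,2::nat}" n] by simp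
qed

lemma idx2_cases: "xs \<in> idx 2 \<Longrightarrow> \<exists>a b. xs = [a,b] \<and> a \<in> {0,1,2} \<and> b \<in> {0,1,2}"
  apply (cases xs, simp add: idx_def)
  subgoal for a t by (cases t, auto simp: idx_def)
  done

lemma comp_Cbr: "comp 2 M (Cbr q) out inp =
   (if inp \<in> idx 2 then M out (rev inp) * r q (inp!1) (inp!0) else 0)"
proof (cases "inp \<in> idx 2")
  case True
  then have ri: "rev inp \<in> idx 2" by (auto simp: idx_def)
  have "comp 2 M (Cbr q) out inp = (\<Sum>mid\<in>idx 2. if mid = rev inp then M out (rev inp) * r q (inp!1) (inp!0) else 0)"
    unfolding comp_def Cbr_def using True by (intro sum.cong) auto
  also have "\<dots> = M out (rev inp) * r q (inp!1) (inp!0)" using ri finite_idx by simp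
  finally show ?thesis using True by simp
next
  case False
  then show ?thesis unfolding comp_def Cbr_def by simp
qed

lemma Lbr_closed: "Lbr q out inp = (if inp = [1,1] \<and> out = [2] then 1 - q else 0)"
proof (cases "inp \<in> idx 2")
  case False
  moreover have "[1,1] \<in> idx 2" by (simp add: idx_def)
  ultimately show ?thesis unfolding Lbr_def mdiff_def comp_Cbr Lmult_def by auto
next
  case True
  then obtain a b where ab: "inp = [a,b]" "a \<in> {0,1,2}" "b \<in> {0,1,2}" using idx2_cases by blast
  show ?thesis unfolding Lbr_def mdiff_def comp_Cbr Lmult_def using True ab
    by (auto simp: r_def idx_def)
qed

lemma J_zero: "comp 2 (Lbr q) (tens 1 1 (idm 1) (Lbr q)) = (\<lambda>_ _. 0)"
proof (intro ext)
  fix out inp :: "nat list"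
  show "comp 2 (Lbr q) (tens 1 1 (idm 1) (Lbr q)) out inp = 0"
    unfolding comp_def tens_def
  proof (intro sum.neutral ballI)
    fix mid assume "mid \<in> idx 2"
    show "Lbr q out mid * (idm 1 (take 1 mid) (take 1 inp) * Lbr q (drop 1 mid) (drop 1 inp)) = 0"
      by (simp add: Lbr_closed)
  qed
qed

lemma comp_zero: "comp k (\<lambda>_ _. 0) N = (\<lambda>_ _. 0)"
  unfolding comp_def by simp

lemma part2: "jacobi_braided_Lie q (Lbr q)"
  unfolding jacobi_braided_Lie_def BJI_def Let_def J_zero comp_zero madd_def by simp

lemma part3:
  fixes q :: "'f::field"
  assumes "q ^ 3 = 1" and "q \<noteq> 1"
  shows "\<not> strict_jacobi_braided_Lie q (Lbr q)"
proof
  assume "strict_jacobi_braided_Lie q (Lbr q)"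
  then have "Lbr q = mneg (comp 2 (Lbr q) (Cbr q))" by (simp add: strict_jacobi_braided_Lie_def BAS_def)
  then have "Lbr q [2] [1,1] = mneg (comp 2 (Lbr q) (Cbr q)) [2] [1,1]" by simp
  then have "1 - q = - ((1 - q) * q)" by (simp add: mneg_def comp_Cbr Lbr_closed idx_def r_def)
  then have "(1 - q) * (1 + q) = 0" by (simp add: algebra_simps)
  then have qm: "q = -1" using assms(2) by (simp add: add_eq_0_iff)
  then have "q ^ 3 = -1" by simp
  with assms(1) have "(1::'f) = -1" by simp
  then have "q = 1" using qm by simp
  with assms(2) show False by simp
qed

lemma part4: "\<not> (\<exists>D e. majid_braided_Lie q D e (Lbr q))"
proof
  assume "\<exists>D e. majid_braided_Lie q D e (Lbr q)"
  then obtain D e where M: "majid_braided_Lie q D e (Lbr q)" by blast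
  then have co: "coalgebra D e" and eb: "comp 1 e (Lbr q) = tens 0 1 e e"
    by (auto simp: majid_braided_Lie_def)
  from co have ism: "is_mor 1 0 e" and cu: "comp 2 (tens 0 1 e (idm 1)) D = idm 1"
    by (auto simp: coalgebra_def)
  have "comp 1 e (Lbr q) [] [0,0] = tens 0 1 e e [] [0,0]" using eb by simp
  then have "e [] [0] * e [] [0] = 0" by (simp add: comp_def tens_def Lbr_closed)
  then have e0: "e [] [0] = 0" by simp
  have "comp 2 (tens 0 1 e (idm 1)) D [0] [0] = 0" unfolding comp_def tens_def
  proof (intro sum.neutral ballI)
    fix mid assume "mid \<in> idx 2"
    then obtain a b where ab: "mid = [a,b]" "a \<in> {0,1,2}" "b \<in> {0,1,2}" using idx2_cases by blast
    have "e [] [a] = 0"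
    proof (cases "a = 0")
      case True then show ?thesis using e0 by simp
    next
      case False
      then have "deg [] \<noteq> deg [a]" using ab by (auto simp: deg_def)
      then show ?thesis using ism unfolding is_mor_def by blast
    qed
    then show "e (take 0 [0]) (take 1 mid) * idm 1 (drop 0 [0]) (drop 1 mid) * D mid [0] = 0"
      using ab by simp
  qed
  moreover have "idm 1 [0] [0] = (1::'a)" by (simp add: idm_def idx_def)
  ultimately show False using cu by simp
qed


definition scA :: "'f::field \<Rightarrow> (nat \<Rightarrow> 'f) \<Rightarrow> (nat \<Rightarrow> 'f)" where
  "scA c a = (\<lambda>n. c * a n)"

definition mA :: "(nat \<Rightarrow> 'f::field) \<Rightarrow> (nat \<Rightarrow> 'f) \<Rightarrow> (nat \<Rightarrow> 'f)" where
  "mA a b = (\<lambda>n. if n = 0 then a 0 * b 0 else if n = 1 then a 0 * b 1 + a 1 * b 0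
      else if n = 2 then a 0 * b 2 + a 1 * b 1 + a 2 * b 0 else 0)"

definition GA :: "nat \<Rightarrow> (nat \<Rightarrow> 'f::field) set" where
  "GA k = {a. \<forall>n. n mod 3 \<noteq> k \<longrightarrow> a n = 0}"

definition vA :: "nat \<Rightarrow> nat \<Rightarrow> 'f::field" where
  "vA k = (\<lambda>n. if n = k then 1 else 0)"

definition prA :: "nat \<Rightarrow> (nat \<Rightarrow> 'f::field) \<Rightarrow> (nat \<Rightarrow> 'f)" where
  "prA k a = (\<lambda>n. if n mod 3 = k then a n else 0)"

lemma vs: "vector_space (scA :: 'f::field \<Rightarrow> _)"
  unfolding vector_space_def by unfold_locales (auto simp: scA_def algebra_simps fun_eq_iff)

lemma modA: "module (scA :: 'f::field \<Rightarrow> _)"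
  using vs unfolding vector_space_def module_def .

lemma subsp: "module.subspace (scA :: 'f::field \<Rightarrow> _) (GA k)"
  unfolding module.subspace_def[OF modA]
  by (auto simp: GA_def scA_def)

lemma decomp: "\<exists>!(a0, a1, a2). a0 \<in> GA 0 \<and> a1 \<in> GA 1 \<and> a2 \<in> GA 2 \<and> (a::nat\<Rightarrow>'f::field) = a0 + a1 + a2"
proof (rule ex1I[of _ "(prA 0 a, prA 1 a, prA 2 a)"])
  show "case (prA 0 a, prA 1 a, prA 2 a) of (a0, a1, a2) \<Rightarrow>
      a0 \<in> GA 0 \<and> a1 \<in> GA 1 \<and> a2 \<in> GA 2 \<and> a = a0 + a1 + a2"
    by (auto simp: GA_def prA_def fun_eq_iff)
next
  fix t assume "case t of (a0, a1, a2) \<Rightarrow> a0 \<in> GA 0 \<and> a1 \<in> GA 1 \<and> a2 \<in> GA 2 \<and> a = a0 + a1 + a2"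
  then obtain a0 a1 a2 where t: "t = (a0,a1,a2)" and h: "a0 \<in> GA 0" "a1 \<in> GA 1" "a2 \<in> GA 2" "a = a0 + a1 + a2"
    by (cases t) auto
  have "a0 = prA 0 a \<and> a1 = prA 1 a \<and> a2 = prA 2 a"
  proof (intro conjI ext)
    fix n :: nat
    have m: "n mod 3 = 0 \<or> n mod 3 = 1 \<or> n mod 3 = 2" by arith
    show "a0 n = prA 0 a n" "a1 n = prA 1 a n" "a2 n = prA 2 a n"
      using h m by (auto simp: GA_def prA_def)
  qed
  then show "t = (prA 0 a, prA 1 a, prA 2 a)" using t by simp
qed

lemma graded:
  assumes "i < 3" "j < 3" "a \<in> GA i" "b \<in> GA j"
  shows "mA a b \<in> GA ((i + j) mod 3)"
proof -
  have a: "\<And>n. n mod 3 \<noteq> i \<Longrightarrow> a n = 0" and b: "\<And>n. n mod 3 \<noteq> j \<Longrightarrow> b n = 0"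
    using assms by (auto simp: GA_def)
  have "i = 0 \<or> i = 1 \<or> i = 2" "j = 0 \<or> j = 1 \<or> j = 2" using assms by auto
  then show ?thesis unfolding GA_def mA_def
    using a[of 0] a[of 1] a[of 2] b[of 0] b[of 1] b[of 2] by auto
qed

lemma part1:
  fixes q :: "'f::field"
  shows "braided_mLie TYPE(nat \<Rightarrow> 'f) q (Lbr q)"
  unfolding braided_mLie_def
proof (intro exI[of _ "scA :: 'f \<Rightarrow> _"] exI[of _ mA] exI[of _ GA] exI[of _ vA] conjI allI impI ballI)
  show "vector_space (scA :: 'f \<Rightarrow> _)" by (rule vs)
  show "module.subspace (scA :: 'f \<Rightarrow> _) (GA k)" for k by (rule subsp)
  show "\<exists>!(a0, a1, a2). a0 \<in> GA 0 \<and> a1 \<in> GA 1 \<and> a2 \<in> GA 2 \<and> (a::nat\<Rightarrow>'f) = a0 + a1 + a2" for a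
    by (rule decomp)
  show "mA (a + b) c = mA a c + mA b c" for a b c :: "nat \<Rightarrow> 'f"
    by (auto simp: mA_def fun_eq_iff algebra_simps)
  show "mA a (b + c) = mA a b + mA a c" for a b c :: "nat \<Rightarrow> 'f"
    by (auto simp: mA_def fun_eq_iff algebra_simps)
  show "mA (scA k a) b = scA k (mA a b)" for k and a b :: "nat \<Rightarrow> 'f"
    by (auto simp: mA_def scA_def fun_eq_iff algebra_simps)
  show "mA a (scA k b) = scA k (mA a b)" for k and a b :: "nat \<Rightarrow> 'f"
    by (auto simp: mA_def scA_def fun_eq_iff algebra_simps)
  show "mA (mA a b) c = mA a (mA b c)" for a b c :: "nat \<Rightarrow> 'f"
    by (auto simp: mA_def fun_eq_iff algebra_simps)
  show "mA a b \<in> GA ((i + j) mod 3)" if "i < 3" "j < 3" "a \<in> GA i" "b \<in> GA j" for i j a b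
    using graded that by blast
  show "vA k \<in> (GA k :: (nat \<Rightarrow> 'f) set)" if "k < 3" for k
    using that by (auto simp: vA_def GA_def)
  fix c0 c1 c2 :: 'f
  assume h: "scA c0 (vA 0) + scA c1 (vA 1) + scA c2 (vA 2) = 0"
  show "c0 = 0" using fun_cong[OF h, of 0] by (simp add: scA_def vA_def)
  show "c1 = 0" using fun_cong[OF h, of 1] by (simp add: scA_def vA_def)
  show "c2 = 0" using fun_cong[OF h, of 2] by (simp add: scA_def vA_def)
next
  fix i j :: nat assume "i < 3" "j < 3"
  then have "i = 0 \<or> i = 1 \<or> i = 2" "j = 0 \<or> j = 1 \<or> j = 2" by auto
  then show "(\<Sum>k<3. scA (Lbr q [k] [i, j]) (vA k)) = mA (vA i) (vA j) - scA (r q j i) (mA (vA j) (vA i))"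
    by (auto simp: Lbr_closed scA_def vA_def mA_def r_def fun_eq_iff numeral_3_eq_3 lessThan_Suc)
qed

theorem mainTheorem5:
  fixes q :: "'f::field"
  assumes "q ^ 3 = 1" and "q \<noteq> 1"
  shows "braided_mLie TYPE(nat \<Rightarrow> 'f) q (Lbr q)
         \<and> jacobi_braided_Lie q (Lbr q)
         \<and> \<not> strict_jacobi_braided_Lie q (Lbr q)
         \<and> \<not> (\<exists>D e. majid_braided_Lie q D e (Lbr q))"
  using part1 part2 part3[OF assms] part4 by blast

end
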